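(* Let $\tau$ be an untwisted skew product with group factor $\mathbb Z^d$ and base shift $(\Sigma,\sigma)$ a transitive countable state Markov shift. The following are equivalent: (a) $\tau$ has the ftp; (b) $\langle D(\tau)\rangle=\mathbb Z^d$; (c) for every finite-index subgroup $\Gamma\subset\mathbb Z^d$, $\langle D(\tau_\Gamma)\rangle_+=\langle D(\tau_\Gamma)\rangle=\mathbb Z^d/\Gamma$.
   Context: Countable state Markov shift $(\Sigma,\sigma)$: countable state set $S$, $\{0,1\}$-matrix $C$ with finite row/column sums, $\Sigma=\{s\in S^{\mathbb Z}:C_{s_is_{i+1}}=1\ \forall i\}$, product of discrete topologies, $\sigma$ left shift; transitive means for all nonempty open $U,V$ some $n$ has $\sigma^n(U)\cap V\neq\emptyset$. Untwisted skew product with group $G$: $\tau(s,g)=(\sigma(s),g+h(s))$ on $\Sigma\times G$, $h:\Sigma\to G$ depending only on $(s_0,s_1)$; for a subgroup $\Gamma$, $\tau_\Gamma(s,g+\Gamma)=(\sigma s,g+h(s)+\Gamma)$ (an untwisted skew product with group $G/\Gamma$). ftp: $\tau_\Gamma$ is transitive for every finite-index subgroup $\Gamma\subset\mathbb Z^d$. With $h(s,n)=\sum_{i=0}^{n-1}h(\sigma^is)$, the displacement set is $D(\tau)=\{h(p,n):n>0,\ \sigma^n(p)=p\}$. For $X$ in an abelian group, $\langle X\rangle$ is the subgroup generated by $X$ and $\langle X\rangle_+$ is the additive semigroup generated by $X$ (all finite sums, with at least one term, of elements of $X$). *)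

theory Defs
  imports "HOL-Analysis.Analysis" "HOL-Algebra.Algebra"
begin

text \<open>States of type 's, state set S, transition relation C (the 0-1 matrix: C a b means C_ab = 1).\<close>

definition finite_rows_cols :: "'s set \<Rightarrow> ('s \<Rightarrow> 's \<Rightarrow> bool) \<Rightarrow> bool" where
  "finite_rows_cols S C \<longleftrightarrow>
     (\<forall>a\<in>S. finite {b\<in>S. C a b} \<and> finite {b\<in>S. C b a})"

definition shift_space :: "'s set \<Rightarrow> ('s \<Rightarrow> 's \<Rightarrow> bool) \<Rightarrow> (int \<Rightarrow> 's) set" where
  "shift_space S C = {x. (\<forall>i. x i \<in> S) \<and> (\<forall>i. C (x i) (x (i + 1)))}"

definition shift :: "(int \<Rightarrow> 's) \<Rightarrow> (int \<Rightarrow> 's)" where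
  "shift x = (\<lambda>i. x (i + 1))"

text \<open>Open subsets of Sigma for the (subspace of the) product of discrete topologies.\<close>
definition sigma_open :: "'s set \<Rightarrow> ('s \<Rightarrow> 's \<Rightarrow> bool) \<Rightarrow> (int \<Rightarrow> 's) set \<Rightarrow> bool" where
  "sigma_open S C U \<longleftrightarrow> U \<subseteq> shift_space S C \<and>
     (\<forall>x\<in>U. \<exists>N::nat. \<forall>y\<in>shift_space S C. (\<forall>i. \<bar>i\<bar> \<le> int N \<longrightarrow> y i = x i) \<longrightarrow> y \<in> U)"

definition shift_transitive :: "'s set \<Rightarrow> ('s \<Rightarrow> 's \<Rightarrow> bool) \<Rightarrow> bool" where
  "shift_transitive S C \<longleftrightarrow>
     (\<forall>U V. sigma_open S C U \<and> U \<noteq> {} \<and> sigma_open S C V \<and> V \<noteq> {} \<longrightarrow>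
        (\<exists>n::nat. (shift ^^ n) ` U \<inter> V \<noteq> {}))"

text \<open>The cocycle h(s) = hh (s_0) (s_1) depends only on (s_0, s_1).\<close>
definition skew :: "('g, 'b) monoid_scheme \<Rightarrow> ('s \<Rightarrow> 's \<Rightarrow> 'g) \<Rightarrow> (int \<Rightarrow> 's) \<times> 'g \<Rightarrow> (int \<Rightarrow> 's) \<times> 'g" where
  "skew G hh = (\<lambda>(x, g). (shift x, g \<otimes>\<^bsub>G\<^esub> hh (x 0) (x 1)))"

text \<open>Open subsets of Sigma x G, G discrete.\<close>
definition skew_open :: "'s set \<Rightarrow> ('s \<Rightarrow> 's \<Rightarrow> bool) \<Rightarrow> ('g, 'b) monoid_scheme \<Rightarrow> ((int \<Rightarrow> 's) \<times> 'g) set \<Rightarrow> bool" where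
  "skew_open S C G W \<longleftrightarrow> W \<subseteq> shift_space S C \<times> carrier G \<and>
     (\<forall>g\<in>carrier G. sigma_open S C {x. (x, g) \<in> W})"

definition skew_transitive :: "'s set \<Rightarrow> ('s \<Rightarrow> 's \<Rightarrow> bool) \<Rightarrow> ('g, 'b) monoid_scheme \<Rightarrow> ('s \<Rightarrow> 's \<Rightarrow> 'g) \<Rightarrow> bool" where
  "skew_transitive S C G hh \<longleftrightarrow>
     (\<forall>U V. skew_open S C G U \<and> U \<noteq> {} \<and> skew_open S C G V \<and> V \<noteq> {} \<longrightarrow>
        (\<exists>n::nat. (skew G hh ^^ n) ` U \<inter> V \<noteq> {}))"

fun hsum :: "('g, 'b) monoid_scheme \<Rightarrow> ('s \<Rightarrow> 's \<Rightarrow> 'g) \<Rightarrow> (int \<Rightarrow> 's) \<Rightarrow> nat \<Rightarrow> 'g" where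
  "hsum G hh x 0 = \<one>\<^bsub>G\<^esub>"
| "hsum G hh x (Suc n) = hsum G hh x n \<otimes>\<^bsub>G\<^esub> hh (x (int n)) (x (int n + 1))"

definition displacement :: "'s set \<Rightarrow> ('s \<Rightarrow> 's \<Rightarrow> bool) \<Rightarrow> ('g, 'b) monoid_scheme \<Rightarrow> ('s \<Rightarrow> 's \<Rightarrow> 'g) \<Rightarrow> 'g set" where
  "displacement S C G hh =
     {hsum G hh p n | p n. p \<in> shift_space S C \<and> n > 0 \<and> (shift ^^ n) p = p}"

text \<open>Additive semigroup generated by A (finite sums with at least one term).\<close>
definition semigen :: "('g, 'b) monoid_scheme \<Rightarrow> 'g set \<Rightarrow> 'g set" where
  "semigen M A = {x. \<forall>T. A \<subseteq> T \<and> (\<forall>a\<in>T. \<forall>b\<in>T. a \<otimes>\<^bsub>M\<^esub> b \<in> T) \<longrightarrow> x \<in> T}"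

definition Zd :: "(int ^ 'd) monoid" where
  "Zd = \<lparr>carrier = UNIV, monoid.mult = (+), one = 0\<rparr>"

definition finite_index :: "(int ^ 'd) set \<Rightarrow> bool" where
  "finite_index \<Gamma> \<longleftrightarrow> subgroup \<Gamma> Zd \<and> finite (rcosets\<^bsub>Zd\<^esub> \<Gamma>)"

text \<open>Cocycle of tau_Gamma: h composed with the projection Z^d -> Z^d/Gamma.\<close>
definition quot_cocycle :: "(int ^ 'd) set \<Rightarrow> ('s \<Rightarrow> 's \<Rightarrow> int ^ 'd) \<Rightarrow> 's \<Rightarrow> 's \<Rightarrow> (int ^ 'd) set" where
  "quot_cocycle \<Gamma> hh = (\<lambda>a b. \<Gamma> #>\<^bsub>Zd\<^esub> hh a b)"

definition ftp :: "'s set \<Rightarrow> ('s \<Rightarrow> 's \<Rightarrow> bool) \<Rightarrow> ('s \<Rightarrow> 's \<Rightarrow> int ^ 'd) \<Rightarrow> bool" where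
  "ftp S C hh \<longleftrightarrow> (\<forall>\<Gamma>. finite_index \<Gamma> \<longrightarrow>
      skew_transitive S C (Zd Mod \<Gamma>) (quot_cocycle \<Gamma> hh))"

end

theory Submission imports Defs begin

lemma Zd_simps [simp]: "carrier Zd = UNIV" "monoid.mult Zd = (+)" "one Zd = 0"
  by (simp_all add: Zd_def)

lemma Zd_comm_group: "comm_group Zd"
  by (rule comm_groupI) (auto simp: Zd_def intro: exI[of _ "- _"])

lemma Zd_group: "group Zd"
  using Zd_comm_group comm_group.axioms(2) by blast

lemma Zd_inv [simp]: "inv\<^bsub>Zd\<^esub> x = - x"
  by (rule group.inv_equality[OF Zd_group]) auto

lemma rcos_Zd: "\<Gamma> #>\<^bsub>Zd\<^esub> a = (\<lambda>g. g + a) ` \<Gamma>"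
  by (auto simp: r_coset_def)

lemma sg_zero: "subgroup \<Gamma> Zd \<Longrightarrow> 0 \<in> \<Gamma>"
  using subgroup.one_closed by fastforce
lemma sg_add: "subgroup \<Gamma> Zd \<Longrightarrow> a \<in> \<Gamma> \<Longrightarrow> b \<in> \<Gamma> \<Longrightarrow> a + b \<in> \<Gamma>"
  using subgroup.m_closed by fastforce
lemma sg_neg: "subgroup \<Gamma> Zd \<Longrightarrow> a \<in> \<Gamma> \<Longrightarrow> - a \<in> \<Gamma>"
  using subgroup.m_inv_closed by fastforce
lemma sg_diff: "subgroup \<Gamma> Zd \<Longrightarrow> a \<in> \<Gamma> \<Longrightarrow> b \<in> \<Gamma> \<Longrightarrow> a - b \<in> \<Gamma>"
  by (metis sg_add sg_neg diff_conv_add_uminus)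

lemma rcos_eq: "subgroup \<Gamma> Zd \<Longrightarrow> (\<Gamma> #>\<^bsub>Zd\<^esub> a = \<Gamma> #>\<^bsub>Zd\<^esub> b) \<longleftrightarrow> a - b \<in> \<Gamma>"
proof
  assume sg: "subgroup \<Gamma> Zd" and e: "\<Gamma> #>\<^bsub>Zd\<^esub> a = \<Gamma> #>\<^bsub>Zd\<^esub> b"
  have "a \<in> \<Gamma> #>\<^bsub>Zd\<^esub> a" using sg_zero[OF sg] by (force simp: rcos_Zd)
  then obtain g where "g \<in> \<Gamma>" "a = g + b" using e by (auto simp: rcos_Zd)
  then show "a - b \<in> \<Gamma>" by simp
next
  assume sg: "subgroup \<Gamma> Zd" and d: "a - b \<in> \<Gamma>"
  show "\<Gamma> #>\<^bsub>Zd\<^esub> a = \<Gamma> #>\<^bsub>Zd\<^esub> b"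
  proof (auto simp: rcos_Zd)
    fix g assume "g \<in> \<Gamma>"
    then have "g + (a - b) \<in> \<Gamma>" using sg_add[OF sg] d by blast
    then show "g + a \<in> (\<lambda>g. g + b) ` \<Gamma>" by (force intro: image_eqI[of _ _ "g + (a - b)"])
  next
    fix g assume "g \<in> \<Gamma>"
    then have "g - (a - b) \<in> \<Gamma>" using sg_diff[OF sg] d by blast
    then show "g + b \<in> (\<lambda>g. g + a) ` \<Gamma>" by (force intro: image_eqI[of _ _ "g - (a - b)"])
  qed
qed

lemma sg_normal: "subgroup \<Gamma> Zd \<Longrightarrow> normal \<Gamma> Zd"
  by (rule comm_group.subgroup_imp_normal[OF Zd_comm_group])

lemma quot_group: "subgroup \<Gamma> Zd \<Longrightarrow> group (Zd Mod \<Gamma>)"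
  by (rule normal.factorgroup_is_group[OF sg_normal])

lemma quot_carrier: "carrier (Zd Mod \<Gamma>) = range (\<lambda>a. \<Gamma> #>\<^bsub>Zd\<^esub> a)"
  by (simp add: carrier_FactGroup)

lemma quot_mult: "subgroup \<Gamma> Zd \<Longrightarrow>
   (\<Gamma> #>\<^bsub>Zd\<^esub> a) \<otimes>\<^bsub>Zd Mod \<Gamma>\<^esub> (\<Gamma> #>\<^bsub>Zd\<^esub> b) = \<Gamma> #>\<^bsub>Zd\<^esub> (a + b)"
  using normal.rcos_sum[OF sg_normal, of \<Gamma> a b] by simp

lemma quot_mult2: "subgroup \<Gamma> Zd \<Longrightarrow>
   (\<Gamma> #>\<^bsub>Zd\<^esub> a) <#>\<^bsub>Zd\<^esub> (\<Gamma> #>\<^bsub>Zd\<^esub> b) = \<Gamma> #>\<^bsub>Zd\<^esub> (a + b)"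
  using quot_mult[of \<Gamma> a b] by simp

lemma quot_one: "subgroup \<Gamma> Zd \<Longrightarrow> \<Gamma> #>\<^bsub>Zd\<^esub> 0 = \<Gamma>"
  using rcos_Zd[of \<Gamma> 0] by simp

lemma rcos_in_sg: "subgroup \<Gamma> Zd \<Longrightarrow> (\<Gamma> #>\<^bsub>Zd\<^esub> a = \<Gamma>) \<longleftrightarrow> a \<in> \<Gamma>"
  using rcos_eq[of \<Gamma> a 0] quot_one[of \<Gamma>] by simp

lemma sgI: "0 \<in> H \<Longrightarrow> (\<And>a b. a \<in> H \<Longrightarrow> b \<in> H \<Longrightarrow> a + b \<in> H) \<Longrightarrow> (\<And>a. a \<in> H \<Longrightarrow> - a \<in> H)
   \<Longrightarrow> subgroup H Zd"
  by (rule subgroup.intro) auto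

lemma sg_smult_nat: "subgroup \<Gamma> Zd \<Longrightarrow> x \<in> \<Gamma> \<Longrightarrow> int n *s x \<in> \<Gamma>"
proof (induction n)
  case 0 then show ?case using sg_zero by simp
next
  case (Suc n)
  have "int (Suc n) *s x = int n *s x + x" by (simp add: vector_sadd_rdistrib)
  then show ?case using Suc sg_add by metis
qed

lemma sg_smult: "subgroup \<Gamma> Zd \<Longrightarrow> x \<in> \<Gamma> \<Longrightarrow> (c::int) *s x \<in> \<Gamma>"
proof (cases "c \<ge> 0")
  case True
  assume a: "subgroup \<Gamma> Zd" "x \<in> \<Gamma>"
  then show ?thesis using sg_smult_nat[OF a, of "nat c"] True by simp
next
  case False
  assume a: "subgroup \<Gamma> Zd" "x \<in> \<Gamma>"
  have "int (nat (-c)) *s x \<in> \<Gamma>" by (rule sg_smult_nat[OF a])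
  then have "- c *s x \<in> \<Gamma>" using False by simp
  then have "- (- c *s x) \<in> \<Gamma>" using sg_neg a by blast
  then show ?thesis by (simp add: vector_smult_lneg)
qed

lemma rcos_in_rcosets: "\<Gamma> #>\<^bsub>Zd\<^esub> a \<in> rcosets\<^bsub>Zd\<^esub> \<Gamma>"
  by (auto simp: RCOSETS_def)

lemma finite_index_mult:
  assumes fi: "finite_index \<Gamma>"
  shows "\<exists>k::nat. k > 0 \<and> int k *s q \<in> \<Gamma>"
proof -
  have sg: "subgroup \<Gamma> Zd" and fin: "finite (rcosets\<^bsub>Zd\<^esub> \<Gamma>)" using fi by (auto simp: finite_index_def)
  define f where "f = (\<lambda>j::nat. \<Gamma> #>\<^bsub>Zd\<^esub> (int j *s q))"
  have "range f \<subseteq> rcosets\<^bsub>Zd\<^esub> \<Gamma>" by (auto simp: f_def rcos_in_rcosets)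
  then have "finite (range f)" using fin finite_subset by blast
  then have "\<not> inj f" using finite_imageD infinite_UNIV_nat by blast
  then obtain i j where ij: "f i = f j" "i \<noteq> j" by (auto simp: inj_def)
  have "int i *s q - int j *s q \<in> \<Gamma>" using rcos_eq[OF sg] ij(1) by (simp add: f_def)
  moreover have "int j *s q - int i *s q \<in> \<Gamma>" using rcos_eq[OF sg] ij(1)[symmetric] by (simp add: f_def)
  ultimately
  have "(int i - int j) *s q \<in> \<Gamma>" "(int j - int i) *s q \<in> \<Gamma>"
    by (auto simp: vector_sub_rdistrib)
  then show ?thesis using ij(2)
    by (metis of_nat_diff zero_less_diff nat_neq_iff less_imp_le)
qed

lemma SG0:
  assumes fi: "finite_index \<Gamma>" and ne: "M \<noteq> {}"
    and add: "\<And>a b. a \<in> M \<Longrightarrow> b \<in> M \<Longrightarrow> a + b \<in> M"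
    and inv: "\<And>a g. a \<in> M \<Longrightarrow> g \<in> \<Gamma> \<Longrightarrow> a + g \<in> M"
  shows "0 \<in> M" "\<And>a. a \<in> M \<Longrightarrow> - a \<in> M"
proof -
  have sg: "subgroup \<Gamma> Zd" using fi by (auto simp: finite_index_def)
  have mult: "int j *s a \<in> M" if "a \<in> M" "j > 0" for a j
    using that(2)
  proof (induction j)
    case 0 then show ?case by simp
  next
    case (Suc j)
    show ?case
    proof (cases "j = 0")
      case True then show ?thesis using that by simp
    next
      case False
      then have "int j *s a \<in> M" using Suc by simp
      moreover have "int (Suc j) *s a = int j *s a + a" by (simp add: vector_sadd_rdistrib)
      ultimately show ?thesis using add that by metis
    qed
  qed
  obtain a0 where a0: "a0 \<in> M" using ne by blast
  obtain k where k: "k > 0" "int k *s a0 \<in> \<Gamma>" using finite_index_mult[OF fi] by blast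
  have "int k *s a0 + - (int k *s a0) \<in> M"
    using inv[OF mult[OF a0 k(1)] sg_neg[OF sg k(2)]] .
  then show z: "0 \<in> M" by simp
  have mult0: "int j *s a \<in> M" if "a \<in> M" for a j
    using mult[OF that, of j] z by (cases "j = 0") auto
  fix a assume a: "a \<in> M"
  obtain k where k: "k > 0" "int k *s a \<in> \<Gamma>" using finite_index_mult[OF fi] by blast
  have "int (k - 1) *s a + - (int k *s a) \<in> M"
    using inv[OF mult0[OF a] sg_neg[OF sg k(2)]] .
  moreover have "int (k - 1) *s a + - (int k *s a) = - a" using k(1)
    by (simp add: of_nat_diff vector_sub_rdistrib)
  ultimately show "- a \<in> M" by simp
qed

lemma SG:
  assumes fi: "finite_index \<Gamma>" and ne: "M \<noteq> {}"
    and add: "\<And>a b. a \<in> M \<Longrightarrow> b \<in> M \<Longrightarrow> a + b \<in> M"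
    and gam: "\<And>a g. a \<in> M \<Longrightarrow> g \<in> \<Gamma> \<Longrightarrow> a + g \<in> M"
    and DM: "D \<subseteq> M"
  shows "generate Zd D \<subseteq> M"
proof
  fix x assume "x \<in> generate Zd D"
  then show "x \<in> M"
  proof (induction rule: generate.induct)
    case one then show ?case using SG0[OF fi ne add gam] by simp
  next
    case (incl h) then show ?case using DM by blast
  next
    case (inv h) then show ?case using SG0(2)[OF fi ne add gam] DM by auto
  next
    case (eng h1 h2) then show ?case using add by simp
  qed
qed

lemma dvd_small_zero: "(m::int) dvd x \<Longrightarrow> \<bar>x\<bar> < m \<Longrightarrow> x = 0"
proof (rule ccontr)
  assume "m dvd x" "\<bar>x\<bar> < m" "x \<noteq> 0"
  then have "\<bar>m\<bar> \<le> \<bar>x\<bar>" using dvd_imp_le_int by blast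
  moreover have "m \<le> \<bar>m\<bar>" by (rule abs_ge_self)
  ultimately show False using \<open>\<bar>x\<bar> < m\<close> by linarith
qed

lemma closure_K:
  assumes "finite K"
  shows "\<forall>(H :: (int ^ 'd) set) v. subgroup H Zd \<and> (\<forall>x\<in>H. \<forall>i. i \<notin> K \<longrightarrow> x$i = 0) \<and> (\<forall>i. i \<notin> K \<longrightarrow> v$i = 0)
     \<and> (\<forall>m>0. \<exists>h\<in>H. \<forall>i. m dvd (v$i - h$i)) \<longrightarrow> v \<in> H"
  using assms
proof (induction K rule: finite_induct)
  case empty
  show ?case
  proof (intro allI impI)
    fix H :: "(int ^ 'd) set" and v :: "int ^ 'd"
    assume a: "subgroup H Zd \<and> (\<forall>x\<in>H. \<forall>i. i \<notin> {} \<longrightarrow> x$i = 0) \<and> (\<forall>i. i \<notin> {} \<longrightarrow> v$i = 0)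
     \<and> (\<forall>m>0. \<exists>h\<in>H. \<forall>i. m dvd (v$i - h$i))"
    then have "v = 0" by (simp add: vec_eq_iff)
    then show "v \<in> H" using sg_zero a by blast
  qed
next
  case (insert k K)
  show ?case
  proof (intro allI impI)
    fix H :: "(int ^ 'd) set" and v :: "int ^ 'd"
    assume a: "subgroup H Zd \<and> (\<forall>x\<in>H. \<forall>i. i \<notin> insert k K \<longrightarrow> x$i = 0) \<and> (\<forall>i. i \<notin> insert k K \<longrightarrow> v$i = 0)
     \<and> (\<forall>m>0. \<exists>h\<in>H. \<forall>i. m dvd (v$i - h$i))"
    then have sg: "subgroup H Zd" and Hs: "\<And>x i. x \<in> H \<Longrightarrow> i \<notin> insert k K \<Longrightarrow> x$i = 0"
      and vs: "\<And>i. i \<notin> insert k K \<Longrightarrow> v$i = 0"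
      and hyp: "\<And>m. m > 0 \<Longrightarrow> \<exists>h\<in>H. \<forall>i. m dvd (v$i - h$i)" by auto
    show "v \<in> H"
    proof (cases "\<forall>x\<in>H. x$k = 0")
      case True
      obtain h where h: "h \<in> H" "\<forall>i. (\<bar>v$k\<bar> + 1) dvd (v$i - h$i)" using hyp[of "\<bar>v$k\<bar> + 1"] by auto
      have "h$k = 0" using True h(1) by blast
      then have "(\<bar>v$k\<bar> + 1) dvd v$k" using h(2) by (metis diff_zero)
      then have vk: "v$k = 0" using dvd_small_zero by fastforce
      have c2: "\<forall>x\<in>H. \<forall>i. i \<notin> K \<longrightarrow> x$i = 0"
      proof (intro ballI allI impI)
        fix x i assume "x \<in> H" "i \<notin> K"
        then show "x$i = 0" using Hs[of x i] True by (cases "i = k") auto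
      qed
      have c3: "\<forall>i. i \<notin> K \<longrightarrow> v$i = 0"
      proof (intro allI impI)
        fix i assume "i \<notin> K"
        then show "v$i = 0" using vs[of i] vk by (cases "i = k") auto
      qed
      have c4: "\<forall>m>0. \<exists>h\<in>H. \<forall>i. m dvd (v$i - h$i)" using hyp by blast
      show "v \<in> H" by (rule insert.IH[rule_format]) (intro conjI sg c2 c3 c4)
    next
      case False
      then obtain x0 where x0: "x0 \<in> H" "x0$k \<noteq> 0" by blast
      have "\<exists>n::nat. n > 0 \<and> (\<exists>x\<in>H. x$k = int n)"
      proof (cases "x0$k > 0")
        case True
        show ?thesis using x0(1) True by (intro exI[of _ "nat (x0$k)"] conjI bexI[of _ x0]) auto
      next
        case False
        show ?thesis using sg_neg[OF sg x0(1)] False x0(2)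
          by (intro exI[of _ "nat (- x0$k)"] conjI bexI[of _ "- x0"]) auto
      qed
      define a where "a = (LEAST n::nat. n > 0 \<and> (\<exists>x\<in>H. x$k = int n))"
      have aP: "a > 0 \<and> (\<exists>x\<in>H. x$k = int a)"
        unfolding a_def by (rule LeastI_ex) fact
      have amin: "\<And>n. n > 0 \<Longrightarrow> (\<exists>x\<in>H. x$k = int n) \<Longrightarrow> a \<le> n"
        unfolding a_def by (rule Least_le) simp
      obtain h0 where h0: "h0 \<in> H" "h0$k = int a" using aP by blast
      have apos: "int a > 0" using aP by simp
      have adv: "int a dvd x$k" if x: "x \<in> H" for x
      proof -
        define y where "y = x - (x$k div int a) *s h0"
        have yH: "y \<in> H" unfolding y_def using sg_diff[OF sg x sg_smult[OF sg h0(1)]] .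
        have "y$k = x$k - (x$k div int a) * int a" by (simp add: y_def h0)
        also have "\<dots> = x$k mod int a" by (rule minus_div_mult_eq_mod)
        finally have yk: "y$k = x$k mod int a" .
        have "y$k = 0"
        proof (rule ccontr)
          assume "y$k \<noteq> 0"
          then have "y$k > 0" "y$k < int a" using yk apos by (auto simp add: order_le_neq_trans)
          moreover have "\<exists>x\<in>H. x$k = int (nat (y$k))" using yH \<open>y$k > 0\<close> by (intro bexI[of _ y]) auto
          ultimately have "a \<le> nat (y$k)" using amin[of "nat (y$k)"] by simp
          then have "int a \<le> y$k" using \<open>y$k > 0\<close> by simp
          then show False using \<open>y$k < int a\<close> by simp
        qed
        then show ?thesis using yk by (metis dvd_eq_mod_eq_0)
      qed
      obtain hA where hA: "hA \<in> H" "\<forall>i. int a dvd (v$i - hA$i)" using hyp[OF apos] by blast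
      have "int a dvd (v$k - hA$k) + hA$k" using hA(2) adv[OF hA(1)] by (intro dvd_add) auto
      then have "int a dvd v$k" by simp
      then obtain t where t: "v$k = int a * t" by (auto elim: dvdE)
      define v' where "v' = v - t *s h0"
      define H0 where "H0 = {x\<in>H. x$k = 0}"
      have sg0: "subgroup H0 Zd" unfolding H0_def
        by (rule sgI) (auto intro: sg_zero[OF sg] sg_add[OF sg] sg_neg[OF sg])
      have H0s: "\<forall>x\<in>H0. \<forall>i. i \<notin> K \<longrightarrow> x$i = 0"
      proof (intro ballI allI impI)
        fix x i assume x: "x \<in> H0" and i: "i \<notin> K"
        show "x$i = 0"
        proof (cases "i = k")
          case True then show ?thesis using x by (simp add: H0_def)
        next
          case False then have "i \<notin> insert k K" using i by simp
          then show ?thesis using Hs x by (simp add: H0_def)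
        qed
      qed
      have v's: "\<forall>i. i \<notin> K \<longrightarrow> v'$i = 0"
      proof (intro allI impI)
        fix i assume i: "i \<notin> K"
        show "v'$i = 0"
        proof (cases "i = k")
          case True then show ?thesis using t h0(2) by (simp add: v'_def mult.commute)
        next
          case False then have "i \<notin> insert k K" using i by simp
          then show ?thesis by (simp add: v'_def vs Hs[OF h0(1)])
        qed
      qed
      have v'hyp: "\<forall>m>0. \<exists>h\<in>H0. \<forall>i. m dvd (v'$i - h$i)"
      proof (intro allI impI)
        fix m :: int assume m: "m > 0"
        obtain h where h: "h \<in> H" "\<forall>i. (m * int a) dvd (v$i - h$i)" using hyp[of "m * int a"] m apos by auto
        define h1 where "h1 = h - t *s h0"
        have h1H: "h1 \<in> H" unfolding h1_def using sg_diff[OF sg h(1) sg_smult[OF sg h0(1)]] .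
        obtain s1 where s1: "h1$k = int a * s1" using adv[OF h1H] by (auto elim: dvdE)
        define h2 where "h2 = h1 - s1 *s h0"
        have h2H: "h2 \<in> H0" unfolding h2_def H0_def using sg_diff[OF sg h1H sg_smult[OF sg h0(1)]] s1 h0(2)
          by (simp add: mult.commute)
        have vh: "v' - h1 = v - h" unfolding v'_def h1_def by simp
        have "v'$k - h1$k = v$k - h$k" using arg_cong[OF vh, of "\<lambda>z. z$k"] by simp
        then have "(m * int a) dvd (v'$k - h1$k)" using h(2) by simp
        moreover have "v'$k = 0" unfolding v'_def using t h0(2) by (simp add: mult.commute)
        ultimately have "(m * int a) dvd (int a * s1)" using s1 by simp
        then have ms: "m dvd s1" using apos by (simp add: mult.commute)
        have "\<forall>i. m dvd (v'$i - h2$i)"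
        proof
          fix i
          have "v'$i - h2$i = (v$i - h$i) + s1 * h0$i"
            unfolding h2_def v'_def h1_def by simp
          moreover have "m dvd (v$i - h$i)" using h(2) by (meson dvd_mult_left)
          moreover have "m dvd s1 * h0$i" using ms by simp
          ultimately show "m dvd (v'$i - h2$i)" by simp
        qed
        then show "\<exists>h\<in>H0. \<forall>i. m dvd (v'$i - h$i)" using h2H by blast
      qed
      have "v' \<in> H0" by (rule insert.IH[rule_format]) (intro conjI sg0 H0s v's v'hyp)
      then have "v' \<in> H" unfolding H0_def by simp
      moreover have "v = v' + t *s h0" unfolding v'_def by simp
      ultimately show "v \<in> H" using sg_add[OF sg _ sg_smult[OF sg h0(1)]] by metis
    qed
  qed
qed

lemma finite_vecs: "finite {x :: int ^ 'd. \<forall>i. x$i \<in> {0..<m}}"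
proof -
  have "{x :: int ^ 'd. \<forall>i. x$i \<in> {0..<m}} \<subseteq> vec_lambda ` (PiE UNIV (\<lambda>_. {0..<m}))"
  proof
    fix x :: "int ^ 'd" assume "x \<in> {x. \<forall>i. x$i \<in> {0..<m}}"
    then show "x \<in> vec_lambda ` (PiE UNIV (\<lambda>_. {0..<m}))"
      by (intro image_eqI[of _ _ "vec_nth x"]) auto
  qed
  moreover have "finite (vec_lambda ` (PiE (UNIV :: 'd set) (\<lambda>_. {0..<m})))"
    by (intro finite_imageI finite_PiE) auto
  ultimately show ?thesis using finite_subset by blast
qed

lemma L1:
  fixes H :: "(int ^ 'd) set"
  assumes sg: "subgroup H Zd" and ne: "H \<noteq> UNIV"
  shows "\<exists>\<Gamma>. finite_index \<Gamma> \<and> H \<subseteq> \<Gamma> \<and> \<Gamma> \<noteq> UNIV"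
proof -
  obtain v where v: "v \<notin> H" using ne by blast
  have "\<not> (\<forall>m>0. \<exists>h\<in>H. \<forall>i. m dvd (v$i - h$i))"
  proof
    assume "\<forall>m>0. \<exists>h\<in>H. \<forall>i. m dvd (v$i - h$i)"
    then have "v \<in> H" by (intro closure_K[of "UNIV :: 'd set", OF finite, rule_format] conjI sg) auto
    then show False using v by blast
  qed
  then obtain m :: int where m: "m > 0" "\<forall>h\<in>H. \<exists>i. \<not> m dvd (v$i - h$i)" by blast
  define \<Gamma> where "\<Gamma> = {x. \<exists>h\<in>H. \<forall>i. m dvd (x$i - h$i)}"
  have sgG: "subgroup \<Gamma> Zd" unfolding \<Gamma>_def
  proof (rule sgI)
    show "0 \<in> {x. \<exists>h\<in>H. \<forall>i. m dvd (x$i - h$i)}" using sg_zero[OF sg] by force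
  next
    fix a b assume "a \<in> {x. \<exists>h\<in>H. \<forall>i. m dvd (x$i - h$i)}" "b \<in> {x. \<exists>h\<in>H. \<forall>i. m dvd (x$i - h$i)}"
    then obtain ha hb where "ha \<in> H" "hb \<in> H" "\<forall>i. m dvd (a$i - ha$i)" "\<forall>i. m dvd (b$i - hb$i)" by blast
    moreover have "(a + b)$i - (ha + hb)$i = (a$i - ha$i) + (b$i - hb$i)" for i by simp
    ultimately have "\<forall>i. m dvd ((a + b)$i - (ha + hb)$i)" by (metis dvd_add)
    then show "a + b \<in> {x. \<exists>h\<in>H. \<forall>i. m dvd (x$i - h$i)}"
      using sg_add[OF sg] \<open>ha \<in> H\<close> \<open>hb \<in> H\<close> by blast
  next
    fix a assume "a \<in> {x. \<exists>h\<in>H. \<forall>i. m dvd (x$i - h$i)}"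
    then obtain ha where "ha \<in> H" "\<forall>i. m dvd (a$i - ha$i)" by blast
    moreover have "(- a)$i - (- ha)$i = - (a$i - ha$i)" for i by simp
    ultimately have "\<forall>i. m dvd ((- a)$i - (- ha)$i)" by (metis dvd_minus_iff)
    then show "- a \<in> {x. \<exists>h\<in>H. \<forall>i. m dvd (x$i - h$i)}"
      using sg_neg[OF sg] \<open>ha \<in> H\<close> by blast
  qed
  have HG: "H \<subseteq> \<Gamma>" unfolding \<Gamma>_def by force
  have vG: "v \<notin> \<Gamma>" unfolding \<Gamma>_def using m by blast
  have "rcosets\<^bsub>Zd\<^esub> \<Gamma> \<subseteq> (\<lambda>a. \<Gamma> #>\<^bsub>Zd\<^esub> a) ` {x :: int ^ 'd. \<forall>i. x$i \<in> {0..<m}}"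
  proof
    fix Y assume "Y \<in> rcosets\<^bsub>Zd\<^esub> \<Gamma>"
    then obtain a where Y: "Y = \<Gamma> #>\<^bsub>Zd\<^esub> a" by (auto simp: RCOSETS_def)
    define a' where "a' = (\<chi> i. a$i mod m)"
    have "m dvd (a$i - a$i mod m)" for i by (simp add: minus_mod_eq_mult_div)
    then have "a - a' \<in> \<Gamma>" unfolding \<Gamma>_def a'_def using sg_zero[OF sg]
      by (intro CollectI bexI[of _ 0]) auto
    then have "Y = \<Gamma> #>\<^bsub>Zd\<^esub> a'" using Y rcos_eq[OF sgG] by simp
    moreover have "a' \<in> {x. \<forall>i. x$i \<in> {0..<m}}" unfolding a'_def using m by auto
    ultimately show "Y \<in> (\<lambda>a. \<Gamma> #>\<^bsub>Zd\<^esub> a) ` {x :: int ^ 'd. \<forall>i. x$i \<in> {0..<m}}" by blast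
  qed
  then have "finite (rcosets\<^bsub>Zd\<^esub> \<Gamma>)" using finite_vecs finite_subset by blast
  then show ?thesis using sgG HG vG unfolding finite_index_def by blast
qed

lemma shift_pow: "(shift ^^ n) x = (\<lambda>i. x (i + int n))"
proof (induction n)
  case 0 then show ?case by simp
next
  case (Suc n) then show ?case by (simp add: shift_def algebra_simps)
qed

lemma shift_space_shifted: "x \<in> shift_space S C \<Longrightarrow> (\<lambda>j. x (j + i)) \<in> shift_space S C"
proof -
  assume x: "x \<in> shift_space S C"
  have "C (x (j + i)) (x (j + 1 + i))" for j
    using x unfolding shift_space_def by (metis (mono_tags, lifting) add.commute add.left_commute mem_Collect_eq)
  then show ?thesis using x unfolding shift_space_def by simp
qed

lemma hsum_Zd_Suc: "hsum Zd hh x (Suc n) = hsum Zd hh x n + hh (x (int n)) (x (int n + 1))"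
  by simp

lemma hsum_Zd_0: "hsum Zd hh x 0 = 0"
  by simp

definition glue :: "(int \<Rightarrow> 's) \<Rightarrow> nat \<Rightarrow> (int \<Rightarrow> 's) \<Rightarrow> (int \<Rightarrow> 's)" where
  "glue z1 k z2 = (\<lambda>i. if i \<le> int k then z1 i else z2 (i - int k))"

lemma glue_left: "i \<le> int k \<Longrightarrow> glue z1 k z2 i = z1 i"
  by (simp add: glue_def)

lemma glue_right: "z1 (int k) = z2 0 \<Longrightarrow> j \<ge> 0 \<Longrightarrow> glue z1 k z2 (int k + j) = z2 j"
  by (cases "j = 0") (auto simp: glue_def)

lemma glue_in:
  assumes "z1 \<in> shift_space S C" "z2 \<in> shift_space S C" "z1 (int k) = z2 0"
  shows "glue z1 k z2 \<in> shift_space S C"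
  unfolding shift_space_def
proof (intro CollectI conjI allI)
  fix i
  show "glue z1 k z2 i \<in> S" using assms by (auto simp: glue_def shift_space_def)
  show "C (glue z1 k z2 i) (glue z1 k z2 (i + 1))"
  proof (cases "i < int k")
    case True then show ?thesis using assms(1) by (simp add: glue_def shift_space_def)
  next
    case False
    have "glue z1 k z2 i = z2 (i - int k)" using False assms(3) by (auto simp: glue_def)
    moreover have "glue z1 k z2 (i + 1) = z2 (i - int k + 1)" using False by (simp add: glue_def algebra_simps)
    ultimately have "glue z1 k z2 i = z2 (i - int k)" "glue z1 k z2 (i + 1) = z2 (i - int k + 1)" by auto
    then show ?thesis using assms(2) by (simp add: shift_space_def)
  qed
qed

lemma hsum_glue_left: "n \<le> k \<Longrightarrow> hsum Zd hh (glue z1 k z2) n = hsum Zd hh z1 n"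
  by (induction n) (auto simp: glue_left)

lemma hsum_glue:
  assumes "z1 (int k) = z2 0"
  shows "hsum Zd hh (glue z1 k z2) (k + m) = hsum Zd hh z1 k + hsum Zd hh z2 m"
proof (induction m)
  case 0 then show ?case using hsum_glue_left[of k k hh z1 z2] by simp
next
  case (Suc m)
  have e1: "glue z1 k z2 (int (k + m)) = z2 (int m)" using glue_right[of z1 k z2, OF assms, of "int m"] by simp
  have e2: "glue z1 k z2 (int (k + m) + 1) = z2 (int m + 1)" using glue_right[of z1 k z2, OF assms, of "int m + 1"]
    by (simp add: add.assoc)
  show ?case using Suc e1 e2 by (simp add: add.assoc)
qed

definition occ :: "'s set \<Rightarrow> ('s \<Rightarrow> 's \<Rightarrow> bool) \<Rightarrow> 's \<Rightarrow> bool" where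
  "occ S C c \<longleftrightarrow> (\<exists>x\<in>shift_space S C. \<exists>i. x i = c)"

definition pathw :: "'s set \<Rightarrow> ('s \<Rightarrow> 's \<Rightarrow> bool) \<Rightarrow> ('s \<Rightarrow> 's \<Rightarrow> int ^ 'd) \<Rightarrow> 's \<Rightarrow> 's \<Rightarrow> nat \<Rightarrow> int ^ 'd \<Rightarrow> bool" where
  "pathw S C hh a b L w \<longleftrightarrow> (\<exists>z\<in>shift_space S C. z 0 = a \<and> z (int L) = b \<and> hsum Zd hh z L = w)"

lemma pathw_occ: "pathw S C hh a b L w \<Longrightarrow> occ S C a \<and> occ S C b"
  unfolding pathw_def occ_def by blast

lemma pathw_refl: "occ S C c \<Longrightarrow> pathw S C hh c c 0 0"
proof -
  assume "occ S C c"
  then obtain x i where x: "x \<in> shift_space S C" "x i = c" unfolding occ_def by blast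
  have "(\<lambda>j. x (j + i)) \<in> shift_space S C" using shift_space_shifted[OF x(1)] .
  then show ?thesis unfolding pathw_def using x(2) by (intro bexI[of _ "\<lambda>j. x (j + i)"]) auto
qed

lemma pathw_concat:
  assumes "pathw S C hh a b L1 w1" "pathw S C hh b c L2 w2"
  shows "pathw S C hh a c (L1 + L2) (w1 + w2)"
proof -
  obtain z1 where z1: "z1 \<in> shift_space S C" "z1 0 = a" "z1 (int L1) = b" "hsum Zd hh z1 L1 = w1"
    using assms(1) unfolding pathw_def by blast
  obtain z2 where z2: "z2 \<in> shift_space S C" "z2 0 = b" "z2 (int L2) = c" "hsum Zd hh z2 L2 = w2"
    using assms(2) unfolding pathw_def by blast
  have m: "z1 (int L1) = z2 0" using z1 z2 by simp
  have "glue z1 L1 z2 \<in> shift_space S C" by (rule glue_in[OF z1(1) z2(1) m])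
  moreover have "glue z1 L1 z2 0 = a" using z1(2) by (simp add: glue_def)
  moreover have "glue z1 L1 z2 (int (L1 + L2)) = c" using glue_right[of z1 L1 z2, OF m, of "int L2"] z2(3) by simp
  moreover have "hsum Zd hh (glue z1 L1 z2) (L1 + L2) = w1 + w2" using hsum_glue[of z1 L1 z2 hh L2, OF m] z1(4) z2(4) by simp
  ultimately show ?thesis unfolding pathw_def by blast
qed

lemma pathw_step:
  assumes "x \<in> shift_space S C"
  shows "pathw S C hh (x i) (x (i + 1)) 1 (hh (x i) (x (i + 1)))"
proof -
  have "(\<lambda>j. x (j + i)) \<in> shift_space S C" using shift_space_shifted[OF assms] .
  then show ?thesis unfolding pathw_def
    by (intro bexI[of _ "\<lambda>j. x (j + i)"]) (auto simp: add.commute)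
qed

lemma irreducible:
  assumes tr: "shift_transitive S C" and a: "occ S C a" and b: "occ S C b"
  shows "\<exists>L w. pathw S C hh a b L w"
proof -
  define U where "U = {z \<in> shift_space S C. z 0 = a}"
  define V where "V = {z \<in> shift_space S C. z 0 = b}"
  have oU: "sigma_open S C U" unfolding sigma_open_def U_def
    by (auto intro!: exI[of _ 0])
  have oV: "sigma_open S C V" unfolding sigma_open_def V_def
    by (auto intro!: exI[of _ 0])
  obtain x i where x: "x \<in> shift_space S C" "x i = a" using a unfolding occ_def by blast
  obtain y j where y: "y \<in> shift_space S C" "y j = b" using b unfolding occ_def by blast
  have "(\<lambda>k. x (k + i)) \<in> U" unfolding U_def using shift_space_shifted[OF x(1)] x(2) by simp
  then have nU: "U \<noteq> {}" by blast
  have "(\<lambda>k. y (k + j)) \<in> V" unfolding V_def using shift_space_shifted[OF y(1)] y(2) by simp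
  then have nV: "V \<noteq> {}" by blast
  obtain n where "(shift ^^ n) ` U \<inter> V \<noteq> {}" using tr oU oV nU nV unfolding shift_transitive_def by blast
  then obtain z where z: "z \<in> U" "(shift ^^ n) z \<in> V" by blast
  have "z (int n) = b" using z(2) by (simp add: V_def shift_pow)
  then have "pathw S C hh a b n (hsum Zd hh z n)" using z(1) unfolding pathw_def U_def by blast
  then show ?thesis by blast
qed

lemma mod_succ_int:
  fixes i L :: int assumes "L > 0"
  shows "(i + 1) mod L = (if i mod L + 1 = L then 0 else i mod L + 1)"
proof -
  have "(i + 1) mod L = (i mod L + 1) mod L" by (simp add: mod_add_left_eq)
  moreover have "0 \<le> i mod L" "i mod L < L" using assms by auto
  ultimately show ?thesis by auto
qed

lemma loop_disp:
  assumes p: "pathw S C hh a a L w" and L: "L > 0"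
  shows "w \<in> displacement S C Zd hh"
proof -
  obtain z where z: "z \<in> shift_space S C" "z 0 = a" "z (int L) = a" "hsum Zd hh z L = w"
    using p unfolding pathw_def by blast
  define q where "q = (\<lambda>k. z (k mod int L))"
  have Lp: "int L > 0" using L by simp
  have qS: "q \<in> shift_space S C" unfolding shift_space_def
  proof (intro CollectI conjI allI)
    fix i
    show "q i \<in> S" using z(1) by (simp add: q_def shift_space_def)
    show "C (q i) (q (i + 1))"
    proof (cases "i mod int L + 1 = int L")
      case True
      then have "q (i + 1) = z (i mod int L + 1)" using mod_succ_int[OF Lp, of i] z(2,3) by (simp add: q_def)
      then show ?thesis using z(1) by (simp add: q_def shift_space_def)
    next
      case False
      then have "q (i + 1) = z (i mod int L + 1)" using mod_succ_int[OF Lp, of i] by (simp add: q_def)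
      then show ?thesis using z(1) by (simp add: q_def shift_space_def)
    qed
  qed
  have per: "(shift ^^ L) q = q" by (simp add: shift_pow q_def)
  have agree: "q (int k) = z (int k)" if "k \<le> L" for k
  proof (cases "k = L")
    case True then show ?thesis using z(2,3) by (simp add: q_def)
  next
    case False then have "int k < int L" using that by simp
    then show ?thesis by (simp add: q_def)
  qed
  have "n \<le> L \<Longrightarrow> hsum Zd hh q n = hsum Zd hh z n" for n
  proof (induction n)
    case 0 then show ?case by simp
  next
    case (Suc n)
    then have "q (int n) = z (int n)" "q (int n + 1) = z (int n + 1)"
      using agree[of n] agree[of "Suc n"] by (auto simp: add.commute)
    then show ?case using Suc by simp
  qed
  then have "hsum Zd hh q L = w" using z(4) by simp
  then show ?thesis unfolding displacement_def using qS per L by blast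
qed

lemma disp_loop:
  assumes "d \<in> displacement S C Zd hh"
  shows "\<exists>c n. n > 0 \<and> pathw S C hh c c n d"
proof -
  obtain p n where p: "p \<in> shift_space S C" "n > 0" "(shift ^^ n) p = p" "d = hsum Zd hh p n"
    using assms unfolding displacement_def by blast
  have "p (int n) = p 0" using fun_cong[OF p(3), of 0] by (simp add: shift_pow)
  then have "pathw S C hh (p 0) (p 0) n d" unfolding pathw_def using p by blast
  then show ?thesis using p(2) by blast
qed

lemma hsum_carrier:
  assumes "monoid G" "\<And>a b. hh a b \<in> carrier G"
  shows "hsum G hh x n \<in> carrier G"
  by (induction n) (auto simp: assms monoid.m_closed monoid.one_closed)

lemma skew_pow:
  assumes G: "monoid G" and hc: "\<And>a b. hh a b \<in> carrier G" and g: "g \<in> carrier G"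
  shows "(skew G hh ^^ n) (x, g) = ((shift ^^ n) x, g \<otimes>\<^bsub>G\<^esub> hsum G hh x n)"
proof (induction n)
  case 0 then show ?case using G g by (simp add: monoid.r_one)
next
  case (Suc n)
  have "(skew G hh ^^ Suc n) (x, g) = skew G hh ((shift ^^ n) x, g \<otimes>\<^bsub>G\<^esub> hsum G hh x n)"
    using Suc by simp
  also have "\<dots> = ((shift ^^ Suc n) x, (g \<otimes>\<^bsub>G\<^esub> hsum G hh x n) \<otimes>\<^bsub>G\<^esub> hh (x (int n)) (x (int n + 1)))"
    by (simp add: skew_def shift_pow shift_def add.commute)
  also have "\<dots> = ((shift ^^ Suc n) x, g \<otimes>\<^bsub>G\<^esub> hsum G hh x (Suc n))"
    by (simp add: monoid.m_assoc[OF G g hsum_carrier[OF G hc] hc])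
  finally show ?case .
qed

lemma hsum_quot:
  assumes "subgroup \<Gamma> Zd"
  shows "hsum (Zd Mod \<Gamma>) (quot_cocycle \<Gamma> hh) x n = \<Gamma> #>\<^bsub>Zd\<^esub> hsum Zd hh x n"
proof (induction n)
  case 0 then show ?case using quot_one[OF assms] by simp
next
  case (Suc n) then show ?case using quot_mult[OF assms] by (simp add: quot_cocycle_def)
qed

lemma disp_quot:
  assumes "subgroup \<Gamma> Zd"
  shows "displacement S C (Zd Mod \<Gamma>) (quot_cocycle \<Gamma> hh) = (\<lambda>v. \<Gamma> #>\<^bsub>Zd\<^esub> v) ` displacement S C Zd hh"
  unfolding displacement_def hsum_quot[OF assms] by blast

lemma quot_cocycle_carrier: "quot_cocycle \<Gamma> hh a b \<in> carrier (Zd Mod \<Gamma>)"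
  by (simp add: quot_cocycle_def quot_carrier)

lemma weights:
  assumes tr: "shift_transitive S C" and gen: "generate Zd (displacement S C Zd hh) = UNIV"
    and fi: "finite_index \<Gamma>" and a: "occ S C a" and b: "occ S C b"
  shows "\<exists>L w. pathw S C hh a b L w \<and> w - t \<in> \<Gamma>"
proof -
  have sg: "subgroup \<Gamma> Zd" using fi by (simp add: finite_index_def)
  define Q where "Q = {w. \<exists>L. pathw S C hh a a L w}"
  define M where "M = {q + g | q g. q \<in> Q \<and> g \<in> \<Gamma>}"
  have QM: "q \<in> M" if "q \<in> Q" for q
    unfolding M_def using that sg_zero[OF sg] by (intro CollectI exI[of _ q] exI[of _ 0]) simp
  have Qadd: "q1 + q2 \<in> Q" if hq: "q1 \<in> Q" "q2 \<in> Q" for q1 q2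
  proof -
    obtain L1 L2 where "pathw S C hh a a L1 q1" "pathw S C hh a a L2 q2" using hq unfolding Q_def by blast
    then have "pathw S C hh a a (L1 + L2) (q1 + q2)" by (rule pathw_concat)
    then show ?thesis unfolding Q_def by blast
  qed
  have Q0: "0 \<in> Q" unfolding Q_def using pathw_refl[OF a] by blast
  have ne: "M \<noteq> {}" using QM[OF Q0] by blast
  have add: "x + y \<in> M" if hxy: "x \<in> M" "y \<in> M" for x y
  proof -
    obtain q1 g1 where 1: "x = q1 + g1" "q1 \<in> Q" "g1 \<in> \<Gamma>" using hxy(1) unfolding M_def by blast
    obtain q2 g2 where 2: "y = q2 + g2" "q2 \<in> Q" "g2 \<in> \<Gamma>" using hxy(2) unfolding M_def by blast
    have "x + y = (q1 + q2) + (g1 + g2)" using 1 2 by (simp add: algebra_simps)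
    moreover have "q1 + q2 \<in> Q" using Qadd 1 2 by blast
    moreover have "g1 + g2 \<in> \<Gamma>" using sg_add[OF sg] 1 2 by blast
    ultimately show ?thesis unfolding M_def by blast
  qed
  have gam: "x + g \<in> M" if hxg: "x \<in> M" "g \<in> \<Gamma>" for x g
  proof -
    obtain q1 g1 where 1: "x = q1 + g1" "q1 \<in> Q" "g1 \<in> \<Gamma>" using hxg(1) unfolding M_def by blast
    have "x + g = q1 + (g1 + g)" using 1 by (simp add: algebra_simps)
    moreover have "g1 + g \<in> \<Gamma>" using sg_add[OF sg] 1 hxg(2) by blast
    ultimately show ?thesis unfolding M_def using 1 by blast
  qed
  have neg: "- x \<in> M" if "x \<in> M" for x using SG0(2)[OF fi ne add gam that] .
  have DM: "displacement S C Zd hh \<subseteq> M"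
  proof
    fix d assume "d \<in> displacement S C Zd hh"
    then obtain c n where cn: "n > 0" "pathw S C hh c c n d" using disp_loop by blast
    have c: "occ S C c" using pathw_occ[OF cn(2)] by blast
    obtain L1 w1 where p1: "pathw S C hh a c L1 w1" using irreducible[OF tr a c] by blast
    obtain L2 w2 where p2: "pathw S C hh c a L2 w2" using irreducible[OF tr c a] by blast
    have "w1 + w2 \<in> Q" using pathw_concat[OF p1 p2] unfolding Q_def by blast
    moreover have "w1 + d + w2 \<in> Q" using pathw_concat[OF pathw_concat[OF p1 cn(2)] p2] unfolding Q_def by blast
    ultimately have "(w1 + d + w2) + - (w1 + w2) \<in> M" using add QM neg by blast
    then show "d \<in> M" by (simp add: algebra_simps)
  qed
  have "generate Zd (displacement S C Zd hh) \<subseteq> M" by (rule SG[OF fi ne add gam DM])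
  then have MU: "M = UNIV" using gen by blast
  obtain L0 w0 where p0: "pathw S C hh a b L0 w0" using irreducible[OF tr a b] by blast
  have "t - w0 \<in> M" using MU by blast
  then obtain q g where qg: "t - w0 = q + g" "q \<in> Q" "g \<in> \<Gamma>" unfolding M_def by blast
  then obtain Lq where pq: "pathw S C hh a a Lq q" unfolding Q_def by blast
  have "pathw S C hh a b (Lq + L0) (q + w0)" using pathw_concat[OF pq p0] .
  moreover have "(q + w0) - t = - g" using qg(1) by (simp add: algebra_simps)
  moreover have "- g \<in> \<Gamma>" using sg_neg[OF sg qg(3)] .
  ultimately show ?thesis by metis
qed

lemma ftp_of_gen:
  assumes tr: "shift_transitive S C" and gen: "generate Zd (displacement S C Zd hh) = UNIV"
    and fi: "finite_index \<Gamma>"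
  shows "skew_transitive S C (Zd Mod \<Gamma>) (quot_cocycle \<Gamma> hh)"
  unfolding skew_transitive_def
proof (intro allI impI)
  fix U V
  assume UV: "skew_open S C (Zd Mod \<Gamma>) U \<and> U \<noteq> {} \<and> skew_open S C (Zd Mod \<Gamma>) V \<and> V \<noteq> {}"
  have sg: "subgroup \<Gamma> Zd" using fi by (simp add: finite_index_def)
  have grp: "group (Zd Mod \<Gamma>)" by (rule quot_group[OF sg])
  have mon: "monoid (Zd Mod \<Gamma>)" using grp by (rule group.is_monoid)
  obtain x g where xg: "(x, g) \<in> U" using UV by auto
  obtain y g' where yg: "(y, g') \<in> V" using UV by auto
  have xS: "x \<in> shift_space S C" and gC: "g \<in> carrier (Zd Mod \<Gamma>)"
    using UV xg unfolding skew_open_def by auto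
  have yS: "y \<in> shift_space S C" and gC': "g' \<in> carrier (Zd Mod \<Gamma>)"
    using UV yg unfolding skew_open_def by auto
  obtain ga where ga: "g = \<Gamma> #>\<^bsub>Zd\<^esub> ga" using gC by (auto simp: quot_carrier)
  obtain gb where gb: "g' = \<Gamma> #>\<^bsub>Zd\<^esub> gb" using gC' by (auto simp: quot_carrier)
  have so: "sigma_open S C {x. (x, g) \<in> U}" using UV gC unfolding skew_open_def by blast
  have "\<exists>N::nat. \<forall>z\<in>shift_space S C. (\<forall>i. \<bar>i\<bar> \<le> int N \<longrightarrow> z i = x i) \<longrightarrow> (z, g) \<in> U"
    using bspec[OF conjunct2[OF so[unfolded sigma_open_def]], of x] xg by simp
  then obtain N :: nat where N: "\<forall>z\<in>shift_space S C. (\<forall>i. \<bar>i\<bar> \<le> int N \<longrightarrow> z i = x i) \<longrightarrow> (z, g) \<in> U"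
    by (elim exE)
  have so': "sigma_open S C {x. (x, g') \<in> V}" using UV gC' unfolding skew_open_def by blast
  have "\<exists>N::nat. \<forall>z\<in>shift_space S C. (\<forall>i. \<bar>i\<bar> \<le> int N \<longrightarrow> z i = y i) \<longrightarrow> (z, g') \<in> V"
    using bspec[OF conjunct2[OF so'[unfolded sigma_open_def]], of y] yg by simp
  then obtain N' :: nat where N': "\<forall>z\<in>shift_space S C. (\<forall>i. \<bar>i\<bar> \<le> int N' \<longrightarrow> z i = y i) \<longrightarrow> (z, g') \<in> V"
    by (elim exE)
  define y' where "y' = (\<lambda>j. y (j + - int N'))"
  have y'S: "y' \<in> shift_space S C" unfolding y'_def by (rule shift_space_shifted[OF yS])
  have ou: "occ S C (x (int N))" using xS unfolding occ_def by blast
  have ov: "occ S C (y' 0)" using y'S unfolding occ_def by blast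
  define t where "t = gb - ga - hsum Zd hh x N - hsum Zd hh y' N'"
  obtain L w where Lw: "pathw S C hh (x (int N)) (y' 0) L w" "w - t \<in> \<Gamma>"
    using weights[OF tr gen fi ou ov] by blast
  then obtain p where p: "p \<in> shift_space S C" "p 0 = x (int N)" "p (int L) = y' 0" "hsum Zd hh p L = w"
    unfolding pathw_def by blast
  define z2 where "z2 = glue p L y'"
  define z where "z = glue x N z2"
  have m1: "p (int L) = y' 0" using p(3) .
  have z2S: "z2 \<in> shift_space S C" unfolding z2_def by (rule glue_in[OF p(1) y'S m1])
  have m2: "x (int N) = z2 0" unfolding z2_def using p(2) by (simp add: glue_left)
  have zS: "z \<in> shift_space S C" unfolding z_def by (rule glue_in[OF xS z2S m2])
  have zU: "(z, g) \<in> U" using N zS by (auto simp: z_def glue_left)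
  define n where "n = N + (L + N')"
  have hs: "hsum Zd hh z n = hsum Zd hh x N + (w + hsum Zd hh y' N')"
    unfolding n_def z_def using hsum_glue[of x N z2 hh "L + N'", OF m2] hsum_glue[of p L y' hh N', OF m1] p(4)
    by (simp add: z2_def)
  have it: "(skew (Zd Mod \<Gamma>) (quot_cocycle \<Gamma> hh) ^^ n) (z, g)
      = ((shift ^^ n) z, \<Gamma> #>\<^bsub>Zd\<^esub> (ga + hsum Zd hh z n))"
    using skew_pow[of "Zd Mod \<Gamma>" "quot_cocycle \<Gamma> hh" g n z, OF mon quot_cocycle_carrier gC] by (simp add: hsum_quot[OF sg] quot_mult2[OF sg] ga)
  have "ga + hsum Zd hh z n - gb = w - t" unfolding hs t_def by (simp add: algebra_simps)
  then have "\<Gamma> #>\<^bsub>Zd\<^esub> (ga + hsum Zd hh z n) = g'" using rcos_eq[OF sg] Lw(2) gb by simp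
  moreover have "((shift ^^ n) z, g') \<in> V"
  proof -
    have "(shift ^^ n) z \<in> shift_space S C" unfolding shift_pow by (rule shift_space_shifted[OF zS])
    moreover have "\<forall>i. \<bar>i\<bar> \<le> int N' \<longrightarrow> (shift ^^ n) z i = y i"
    proof (intro allI impI)
      fix i :: int assume i: "\<bar>i\<bar> \<le> int N'"
      have e: "i + int n = int N + (int L + (i + int N'))" by (simp add: n_def)
      have "z (int N + (int L + (i + int N'))) = z2 (int L + (i + int N'))"
        unfolding z_def using glue_right[of x N z2, OF m2, of "int L + (i + int N')"] i by simp
      also have "\<dots> = y' (i + int N')"
        unfolding z2_def using glue_right[of p L y', OF m1, of "i + int N'"] i by simp
      also have "\<dots> = y i" by (simp add: y'_def)
      finally show "(shift ^^ n) z i = y i" by (simp add: shift_pow e)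
    qed
    ultimately show ?thesis using N' by blast
  qed
  ultimately have "(skew (Zd Mod \<Gamma>) (quot_cocycle \<Gamma> hh) ^^ n) (z, g) \<in> V" using it by simp
  then have "(skew (Zd Mod \<Gamma>) (quot_cocycle \<Gamma> hh) ^^ n) ` U \<inter> V \<noteq> {}" using zU by blast
  then show "\<exists>n. (skew (Zd Mod \<Gamma>) (quot_cocycle \<Gamma> hh) ^^ n) ` U \<inter> V \<noteq> {}" by blast
qed

lemma gen_of_ftp:
  assumes tr: "shift_transitive S C" and ne: "shift_space S C \<noteq> {}" and f: "ftp S C hh"
  shows "generate Zd (displacement S C Zd hh) = UNIV"
proof (rule ccontr)
  assume nU: "generate Zd (displacement S C Zd hh) \<noteq> UNIV"
  have sgH: "subgroup (generate Zd (displacement S C Zd hh)) Zd"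
    by (rule group.generate_is_subgroup[OF Zd_group]) simp
  obtain \<Gamma> where fi: "finite_index \<Gamma>" and sub: "generate Zd (displacement S C Zd hh) \<subseteq> \<Gamma>"
    and GnU: "\<Gamma> \<noteq> UNIV" using L1[OF sgH nU] by (elim exE conjE)
  have sg: "subgroup \<Gamma> Zd" using fi by (simp add: finite_index_def)
  have "displacement S C Zd hh \<subseteq> generate Zd (displacement S C Zd hh)"
    by (auto intro: generate.incl)
  then have DG: "displacement S C Zd hh \<subseteq> \<Gamma>" using sub by (rule order_trans)
  obtain v where v: "v \<notin> \<Gamma>" using GnU by blast
  have st: "skew_transitive S C (Zd Mod \<Gamma>) (quot_cocycle \<Gamma> hh)" using f fi unfolding ftp_def by blast
  have loopG: "w \<in> \<Gamma>" if lp: "pathw S C hh c c L w" for c L w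
  proof (cases "L = 0")
    case True
    then have "w = 0" using lp unfolding pathw_def by auto
    then show ?thesis using sg_zero[OF sg] by simp
  next
    case False
    then show ?thesis using loop_disp[OF lp] DG by blast
  qed
  obtain x0 where x0: "x0 \<in> shift_space S C" using ne by blast
  define a0 where "a0 = x0 0"
  have oa0: "occ S C a0" unfolding occ_def a0_def using x0 by blast
  define \<phi> where "\<phi> = (\<lambda>c. SOME w. \<exists>L. pathw S C hh a0 c L w)"
  have phi: "\<exists>L. pathw S C hh a0 c L (\<phi> c)" if oc: "occ S C c" for c
  proof -
    have "\<exists>w L. pathw S C hh a0 c L w" using irreducible[OF tr oa0 oc] by blast
    then have "\<exists>w. \<exists>L. pathw S C hh a0 c L w" by blast
    then show ?thesis unfolding \<phi>_def by (rule someI_ex)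
  qed
  have phi_uniq: "w - \<phi> c \<in> \<Gamma>" if pw: "pathw S C hh a0 c L w" for c L w
  proof -
    have oc: "occ S C c" using pathw_occ[OF pw] by blast
    obtain L' where p': "pathw S C hh a0 c L' (\<phi> c)" using phi[OF oc] by blast
    obtain L3 w3 where p3: "pathw S C hh c a0 L3 w3" using irreducible[OF tr oc oa0] by blast
    have "w + w3 \<in> \<Gamma>" using loopG[OF pathw_concat[OF pw p3]] .
    moreover have "\<phi> c + w3 \<in> \<Gamma>" using loopG[OF pathw_concat[OF p' p3]] .
    ultimately have "(w + w3) - (\<phi> c + w3) \<in> \<Gamma>" using sg_diff[OF sg] by blast
    then show ?thesis by simp
  qed
  have edge: "\<phi> (x i) + hh (x i) (x (i + 1)) - \<phi> (x (i + 1)) \<in> \<Gamma>" if xS: "x \<in> shift_space S C" for x i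
  proof -
    have oc: "occ S C (x i)" using xS unfolding occ_def by blast
    obtain L where p: "pathw S C hh a0 (x i) L (\<phi> (x i))" using phi[OF oc] by blast
    have "pathw S C hh a0 (x (i + 1)) (L + 1) (\<phi> (x i) + hh (x i) (x (i + 1)))"
      using pathw_concat[OF p pathw_step[OF xS, of hh i]] .
    then show ?thesis using phi_uniq by blast
  qed
  have cocyc: "hsum Zd hh x n + \<phi> (x 0) - \<phi> (x (int n)) \<in> \<Gamma>" if xS: "x \<in> shift_space S C" for x n
  proof (induction n)
    case 0 then show ?case using sg_zero[OF sg] by simp
  next
    case (Suc n)
    have eq: "hsum Zd hh x (Suc n) + \<phi> (x 0) - \<phi> (x (int (Suc n)))
       = (hsum Zd hh x n + \<phi> (x 0) - \<phi> (x (int n)))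
         + (\<phi> (x (int n)) + hh (x (int n)) (x (int n + 1)) - \<phi> (x (int n + 1)))"
      by (simp add: algebra_simps)
    show ?case unfolding eq by (rule sg_add[OF sg Suc edge[OF xS, of "int n"]])
  qed
  define U where "U = {(x, \<Gamma> #>\<^bsub>Zd\<^esub> \<phi> (x 0)) | x. x \<in> shift_space S C}"
  define V where "V = {(x, \<Gamma> #>\<^bsub>Zd\<^esub> (\<phi> (x 0) + v)) | x. x \<in> shift_space S C}"
  have openI: "skew_open S C (Zd Mod \<Gamma>) {(x, \<Gamma> #>\<^bsub>Zd\<^esub> F (x 0)) | x. x \<in> shift_space S C}" for F
    unfolding skew_open_def
  proof (intro conjI ballI)
    show "{(x, \<Gamma> #>\<^bsub>Zd\<^esub> F (x 0)) | x. x \<in> shift_space S C} \<subseteq> shift_space S C \<times> carrier (Zd Mod \<Gamma>)"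
      by (auto simp: quot_carrier)
    fix g assume "g \<in> carrier (Zd Mod \<Gamma>)"
    show "sigma_open S C {x. (x, g) \<in> {(x, \<Gamma> #>\<^bsub>Zd\<^esub> F (x 0)) | x. x \<in> shift_space S C}}"
      unfolding sigma_open_def
    proof (intro conjI ballI)
      show "{x. (x, g) \<in> {(x, \<Gamma> #>\<^bsub>Zd\<^esub> F (x 0)) | x. x \<in> shift_space S C}} \<subseteq> shift_space S C" by auto
      fix x assume x: "x \<in> {x. (x, g) \<in> {(x, \<Gamma> #>\<^bsub>Zd\<^esub> F (x 0)) | x. x \<in> shift_space S C}}"
      then have gx: "g = \<Gamma> #>\<^bsub>Zd\<^esub> F (x 0)" by auto
      show "\<exists>N::nat. \<forall>y\<in>shift_space S C. (\<forall>i. \<bar>i\<bar> \<le> int N \<longrightarrow> y i = x i) \<longrightarrow>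
          y \<in> {x. (x, g) \<in> {(x, \<Gamma> #>\<^bsub>Zd\<^esub> F (x 0)) | x. x \<in> shift_space S C}}"
      proof (intro exI[of _ 0] ballI impI)
        fix y assume y: "y \<in> shift_space S C" "\<forall>i. \<bar>i\<bar> \<le> int 0 \<longrightarrow> y i = x i"
        then have "y 0 = x 0" by simp
        then show "y \<in> {x. (x, g) \<in> {(x, \<Gamma> #>\<^bsub>Zd\<^esub> F (x 0)) | x. x \<in> shift_space S C}}"
          using y(1) gx by auto
      qed
    qed
  qed
  have oU: "skew_open S C (Zd Mod \<Gamma>) U" unfolding U_def by (rule openI)
  have oV: "skew_open S C (Zd Mod \<Gamma>) V" unfolding V_def using openI[of "\<lambda>c. \<phi> c + v"] .
  have nU: "U \<noteq> {}" unfolding U_def using x0 by blast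
  have nV: "V \<noteq> {}" unfolding V_def using x0 by blast
  obtain n where "(skew (Zd Mod \<Gamma>) (quot_cocycle \<Gamma> hh) ^^ n) ` U \<inter> V \<noteq> {}"
    using st oU oV nU nV unfolding skew_transitive_def by blast
  then obtain x where xS: "x \<in> shift_space S C"
    and inV: "(skew (Zd Mod \<Gamma>) (quot_cocycle \<Gamma> hh) ^^ n) (x, \<Gamma> #>\<^bsub>Zd\<^esub> \<phi> (x 0)) \<in> V"
    unfolding U_def by blast
  have mon: "monoid (Zd Mod \<Gamma>)" using quot_group[OF sg] by (rule group.is_monoid)
  have gc: "\<Gamma> #>\<^bsub>Zd\<^esub> \<phi> (x 0) \<in> carrier (Zd Mod \<Gamma>)" by (simp add: quot_carrier)
  have "(skew (Zd Mod \<Gamma>) (quot_cocycle \<Gamma> hh) ^^ n) (x, \<Gamma> #>\<^bsub>Zd\<^esub> \<phi> (x 0))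
      = ((shift ^^ n) x, \<Gamma> #>\<^bsub>Zd\<^esub> (\<phi> (x 0) + hsum Zd hh x n))"
    using skew_pow[of "Zd Mod \<Gamma>" "quot_cocycle \<Gamma> hh" _ n x, OF mon quot_cocycle_carrier gc]
    by (simp add: hsum_quot[OF sg] quot_mult2[OF sg])
  then obtain y where y: "y \<in> shift_space S C" "(shift ^^ n) x = y"
    "\<Gamma> #>\<^bsub>Zd\<^esub> (\<phi> (x 0) + hsum Zd hh x n) = \<Gamma> #>\<^bsub>Zd\<^esub> (\<phi> (y 0) + v)"
    using inV unfolding V_def by auto
  have "y 0 = x (int n)" using y(2) by (auto simp: shift_pow)
  then have d1: "(\<phi> (x 0) + hsum Zd hh x n) - (\<phi> (x (int n)) + v) \<in> \<Gamma>"
    using y(3) rcos_eq[OF sg] by simp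
  have d2: "hsum Zd hh x n + \<phi> (x 0) - \<phi> (x (int n)) \<in> \<Gamma>" using cocyc[OF xS] .
  have "(hsum Zd hh x n + \<phi> (x 0) - \<phi> (x (int n))) - ((\<phi> (x 0) + hsum Zd hh x n) - (\<phi> (x (int n)) + v)) \<in> \<Gamma>"
    using sg_diff[OF sg d2 d1] .
  then have "v \<in> \<Gamma>" by (simp add: algebra_simps)
  then show False using v by blast
qed

lemma gen_nonempty:
  assumes "generate Zd D = (UNIV :: (int ^ 'd) set)"
  shows "D \<noteq> {}"
proof
  assume "D = {}"
  have "x \<in> {0}" if "x \<in> generate Zd D" for x :: "int ^ 'd"
    using that by (induction rule: generate.induct) (auto simp: \<open>D = {}\<close>)
  moreover have "(vec 1 :: int ^ 'd) \<noteq> 0" by (simp add: vec_eq_iff)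
  ultimately show False using assms by blast
qed

lemma c_of_gen:
  assumes gen: "generate Zd (displacement S C Zd hh) = UNIV" and fi: "finite_index \<Gamma>"
  shows "semigen (Zd Mod \<Gamma>) (displacement S C (Zd Mod \<Gamma>) (quot_cocycle \<Gamma> hh))
           = generate (Zd Mod \<Gamma>) (displacement S C (Zd Mod \<Gamma>) (quot_cocycle \<Gamma> hh))
       \<and> generate (Zd Mod \<Gamma>) (displacement S C (Zd Mod \<Gamma>) (quot_cocycle \<Gamma> hh)) = carrier (Zd Mod \<Gamma>)"
proof -
  have sg: "subgroup \<Gamma> Zd" using fi by (simp add: finite_index_def)
  define D where "D = displacement S C Zd hh"
  define D' where "D' = displacement S C (Zd Mod \<Gamma>) (quot_cocycle \<Gamma> hh)"
  have D'eq: "D' = (\<lambda>v. \<Gamma> #>\<^bsub>Zd\<^esub> v) ` D" unfolding D'_def D_def by (rule disp_quot[OF sg])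
  have D'C: "D' \<subseteq> carrier (Zd Mod \<Gamma>)" unfolding D'eq by (auto simp: quot_carrier)
  have Dne: "D \<noteq> {}" unfolding D_def using gen_nonempty[OF gen] .
  have c1: "carrier (Zd Mod \<Gamma>) \<subseteq> semigen (Zd Mod \<Gamma>) D'"
  proof
    fix Y assume "Y \<in> carrier (Zd Mod \<Gamma>)"
    then obtain a where Y: "Y = \<Gamma> #>\<^bsub>Zd\<^esub> a" by (auto simp: quot_carrier)
    show "Y \<in> semigen (Zd Mod \<Gamma>) D'" unfolding semigen_def
    proof (intro CollectI allI impI)
      fix T assume T: "D' \<subseteq> T \<and> (\<forall>a\<in>T. \<forall>b\<in>T. a \<otimes>\<^bsub>Zd Mod \<Gamma>\<^esub> b \<in> T)"
      define M where "M = {a. \<Gamma> #>\<^bsub>Zd\<^esub> a \<in> T}"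
      have add: "a + b \<in> M" if hab: "a \<in> M" "b \<in> M" for a b
      proof -
        have "(\<Gamma> #>\<^bsub>Zd\<^esub> a) \<otimes>\<^bsub>Zd Mod \<Gamma>\<^esub> (\<Gamma> #>\<^bsub>Zd\<^esub> b) \<in> T" using T hab unfolding M_def by blast
        then show ?thesis unfolding M_def using quot_mult[OF sg] by simp
      qed
      have gam: "a + g \<in> M" if hag: "a \<in> M" "g \<in> \<Gamma>" for a g
      proof -
        have "\<Gamma> #>\<^bsub>Zd\<^esub> (a + g) = \<Gamma> #>\<^bsub>Zd\<^esub> a" using rcos_eq[OF sg] hag(2) by simp
        then show ?thesis using hag(1) unfolding M_def by simp
      qed
      have DM: "D \<subseteq> M" using T unfolding M_def D'eq by blast
      have Mne: "M \<noteq> {}" using DM Dne by blast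
      have "generate Zd D \<subseteq> M" by (rule SG[OF fi Mne add gam DM])
      then have "a \<in> M" using gen unfolding D_def by blast
      then show "Y \<in> T" unfolding M_def Y by simp
    qed
  qed
  have c2: "semigen (Zd Mod \<Gamma>) D' \<subseteq> generate (Zd Mod \<Gamma>) D'"
  proof
    fix x assume xs: "x \<in> semigen (Zd Mod \<Gamma>) D'"
    have i1: "D' \<subseteq> generate (Zd Mod \<Gamma>) D'" by (auto intro: generate.incl)
    have i2: "\<forall>a\<in>generate (Zd Mod \<Gamma>) D'. \<forall>b\<in>generate (Zd Mod \<Gamma>) D'. a \<otimes>\<^bsub>Zd Mod \<Gamma>\<^esub> b \<in> generate (Zd Mod \<Gamma>) D'"
      by (intro ballI generate.eng)
    have "\<forall>T. D' \<subseteq> T \<and> (\<forall>a\<in>T. \<forall>b\<in>T. a \<otimes>\<^bsub>Zd Mod \<Gamma>\<^esub> b \<in> T) \<longrightarrow> x \<in> T"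
      using xs unfolding semigen_def by simp
    then have "D' \<subseteq> generate (Zd Mod \<Gamma>) D' \<and> (\<forall>a\<in>generate (Zd Mod \<Gamma>) D'. \<forall>b\<in>generate (Zd Mod \<Gamma>) D'. a \<otimes>\<^bsub>Zd Mod \<Gamma>\<^esub> b \<in> generate (Zd Mod \<Gamma>) D')
        \<longrightarrow> x \<in> generate (Zd Mod \<Gamma>) D'" by (rule spec)
    then show "x \<in> generate (Zd Mod \<Gamma>) D'" using i1 i2 by blast
  qed
  have c3: "generate (Zd Mod \<Gamma>) D' \<subseteq> carrier (Zd Mod \<Gamma>)"
    by (rule group.generate_incl[OF quot_group[OF sg] D'C])
  show ?thesis using c1 c2 c3 unfolding D'_def by blast
qed

lemma gen_of_c:
  assumes c: "\<forall>\<Gamma>. finite_index \<Gamma> \<longrightarrow>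
      generate (Zd Mod \<Gamma>) (displacement S C (Zd Mod \<Gamma>) (quot_cocycle \<Gamma> hh)) = carrier (Zd Mod \<Gamma>)"
  shows "generate Zd (displacement S C Zd hh) = UNIV"
proof (rule ccontr)
  assume nU: "generate Zd (displacement S C Zd hh) \<noteq> UNIV"
  have sgH: "subgroup (generate Zd (displacement S C Zd hh)) Zd"
    by (rule group.generate_is_subgroup[OF Zd_group]) simp
  obtain \<Gamma> where fi: "finite_index \<Gamma>" and sub: "generate Zd (displacement S C Zd hh) \<subseteq> \<Gamma>"
    and GnU: "\<Gamma> \<noteq> UNIV" using L1[OF sgH nU] by (elim exE conjE)
  have sg: "subgroup \<Gamma> Zd" using fi by (simp add: finite_index_def)
  have "displacement S C Zd hh \<subseteq> generate Zd (displacement S C Zd hh)"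
    by (auto intro: generate.incl)
  then have DG: "displacement S C Zd hh \<subseteq> \<Gamma>" using sub by (rule order_trans)
  obtain v where v: "v \<notin> \<Gamma>" using GnU by blast
  define D' where "D' = displacement S C (Zd Mod \<Gamma>) (quot_cocycle \<Gamma> hh)"
  have D'eq: "D' = (\<lambda>v. \<Gamma> #>\<^bsub>Zd\<^esub> v) ` displacement S C Zd hh" unfolding D'_def by (rule disp_quot[OF sg])
  have D'1: "D' \<subseteq> {\<Gamma>}" unfolding D'eq using DG rcos_in_sg[OF sg] by auto
  have grp: "group (Zd Mod \<Gamma>)" by (rule quot_group[OF sg])
  have GG: "\<Gamma> \<otimes>\<^bsub>Zd Mod \<Gamma>\<^esub> \<Gamma> = \<Gamma>" using quot_mult[OF sg, of 0 0] quot_one[OF sg] by simp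
  have Gi: "inv\<^bsub>Zd Mod \<Gamma>\<^esub> \<Gamma> = \<Gamma>" using monoid.inv_one[OF group.is_monoid[OF grp]] by simp
  have "x \<in> {\<Gamma>}" if "x \<in> generate (Zd Mod \<Gamma>) D'" for x
    using that
  proof (induction rule: generate.induct)
    case one then show ?case by simp
  next
    case (incl h) then show ?case using D'1 by blast
  next
    case (inv h) then show ?case using D'1 Gi by auto
  next
    case (eng h1 h2) then show ?case using GG by auto
  qed
  moreover have "\<Gamma> #>\<^bsub>Zd\<^esub> v \<in> carrier (Zd Mod \<Gamma>)" by (simp add: quot_carrier)
  ultimately have "\<Gamma> #>\<^bsub>Zd\<^esub> v = \<Gamma>" using c fi unfolding D'_def by blast
  then have "v \<in> \<Gamma>" using rcos_in_sg[OF sg] by simp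
  then show False using v by blast
qed

theorem mainTheorem5:
  fixes S :: "'s set" and C :: "'s \<Rightarrow> 's \<Rightarrow> bool" and hh :: "'s \<Rightarrow> 's \<Rightarrow> int ^ 'd"
  assumes "countable S"
    and "finite_rows_cols S C"
    and "shift_space S C \<noteq> {}"
    and "shift_transitive S C"
  shows "(ftp S C hh \<longleftrightarrow> generate Zd (displacement S C Zd hh) = UNIV)
       \<and> (generate Zd (displacement S C Zd hh) = UNIV \<longleftrightarrow>
          (\<forall>\<Gamma>. finite_index \<Gamma> \<longrightarrow>
             semigen (Zd Mod \<Gamma>) (displacement S C (Zd Mod \<Gamma>) (quot_cocycle \<Gamma> hh))
               = generate (Zd Mod \<Gamma>) (displacement S C (Zd Mod \<Gamma>) (quot_cocycle \<Gamma> hh))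
           \<and> generate (Zd Mod \<Gamma>) (displacement S C (Zd Mod \<Gamma>) (quot_cocycle \<Gamma> hh))
               = carrier (Zd Mod \<Gamma>)))"
proof (intro conjI iffI allI impI)
  assume "ftp S C hh"
  then show "generate Zd (displacement S C Zd hh) = UNIV" using gen_of_ftp assms(3,4) by blast
next
  assume g: "generate Zd (displacement S C Zd hh) = UNIV"
  then show "ftp S C hh" unfolding ftp_def using ftp_of_gen[OF assms(4) g] by blast
next
  fix \<Gamma> :: "(int ^ 'd) set"
  assume g: "generate Zd (displacement S C Zd hh) = UNIV" and fi: "finite_index \<Gamma>"
  show "semigen (Zd Mod \<Gamma>) (displacement S C (Zd Mod \<Gamma>) (quot_cocycle \<Gamma> hh))
               = generate (Zd Mod \<Gamma>) (displacement S C (Zd Mod \<Gamma>) (quot_cocycle \<Gamma> hh))"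
    using c_of_gen[OF g fi] by blast
  show "generate (Zd Mod \<Gamma>) (displacement S C (Zd Mod \<Gamma>) (quot_cocycle \<Gamma> hh)) = carrier (Zd Mod \<Gamma>)"
    using c_of_gen[OF g fi] by blast
next
  assume c: "\<forall>\<Gamma>. finite_index \<Gamma> \<longrightarrow>
             semigen (Zd Mod \<Gamma>) (displacement S C (Zd Mod \<Gamma>) (quot_cocycle \<Gamma> hh))
               = generate (Zd Mod \<Gamma>) (displacement S C (Zd Mod \<Gamma>) (quot_cocycle \<Gamma> hh))
           \<and> generate (Zd Mod \<Gamma>) (displacement S C (Zd Mod \<Gamma>) (quot_cocycle \<Gamma> hh))
               = carrier (Zd Mod \<Gamma>)"
  show "generate Zd (displacement S C Zd hh) = UNIV"
    by (rule gen_of_c) (use c in blast)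
qed

end
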